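(* Let $L>0$ be the constant of the quadratic upper bound below and let $0<\alpha\le 2/L$. There exists a constant $\rho_2>0$, independent of $k$, such that for every $k\ge1$ there are $A^{k+1}=\nabla_wH(w^{k+1},z^{k+1})$ and $B^{k+1}\in\partial_zH(w^{k+1},z^{k+1})$ with $$\big\|[A^{k+1};B^{k+1}]\big\|_2\le\rho_2\big\|[w^{k+1};z^{k+1}]-[w^k;z^k]\big\|_2 .$$
   Context: Data: $y\in\mathbb{R}^m$, $X\in\mathbb{R}^{m\times n}$ with rows $x_i^T$, preconditioned so that $X^TX=I_n$. Fix $\delta>0$. $S(x)=\frac{1}{2\sqrt{\delta}}x^2+\frac{\sqrt\delta}{2}$ if $|x|<\sqrt\delta$, $S(x)=|x|$ if $|x|\ge\sqrt\delta$. $H(w,z)=\tfrac12\|y-Xw-z\|_2^2+\delta\sum_{i=1}^m\frac{|z_i|}{S(y_i-x_i^Tw)}$, with $\nabla_w H(w,z)=-X^T(y-Xw-z)+\delta X^Tv$, $v_i=\frac{|z_i|S'(y_i-x_i^Tw)}{S(y_i-x_i^Tw)^2}$. $T(x)=0$ if $|x|\le\sqrt\delta$, $T(x)=x-\delta/x$ if $|x|>\sqrt\delta$, componentwise. SARM iteration: $w^0=0$, $z^0=0$, $w^{k+1}=w^k-\alpha\nabla_wH(w^k,z^k)$, $z^{k+1}=T(y-Xw^{k+1})$. $L>0$ is a constant depending only on $\delta$ such that for all $w,w'$ and all $z$ with $|z_i|\le S(y_i-x_i^Tw)$: $H(w',z)\le H(w,z)+\nabla_wH(w,z)^T(w'-w)+\frac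 L2\|w'-w\|_2^2$. For a proper lsc $\sigma:\mathbb{R}^d\to(-\infty,\infty]$, the Fréchet subdifferential $\hat\partial\sigma(b)$ is the set of $u$ with $\liminf_{a\to b,a\ne b}\frac{\sigma(a)-\sigma(b)-\langle u,a-b\rangle}{\|a-b\|}\ge0$, and the limiting subdifferential is $\partial\sigma(x)=\{u:\exists x_k\to x,\ \sigma(x_k)\to\sigma(x),\ u_k\in\hat\partial\sigma(x_k),\ u_k\to u\}$. $\partial_zH(w,z)$ is the limiting subdifferential of $z\mapsto H(w,z)$. *)

theory Defs
  imports "HOL-Analysis.Analysis"
begin

definition S_fun :: "real \<Rightarrow> real \<Rightarrow> real" where
  "S_fun \<delta> x = (if \<bar>x\<bar> < sqrt \<delta> then x\<^sup>2 / (2 * sqrt \<delta>) + sqrt \<delta> / 2 else \<bar>x\<bar>)"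

definition S_deriv :: "real \<Rightarrow> real \<Rightarrow> real" where
  "S_deriv \<delta> x = (if \<bar>x\<bar> < sqrt \<delta> then x / sqrt \<delta> else sgn x)"

definition T_fun :: "real \<Rightarrow> real \<Rightarrow> real" where
  "T_fun \<delta> x = (if \<bar>x\<bar> \<le> sqrt \<delta> then 0 else x - \<delta> / x)"

definition T_vec :: "real \<Rightarrow> real ^ 'm \<Rightarrow> real ^ 'm" where
  "T_vec \<delta> v = (\<chi> i. T_fun \<delta> (v $ i))"

text \<open>Objective H(w,z); rows of X are x_i, so (y - X w)_i = y_i - x_i^T w.\<close>
definition H_fun :: "real ^ 'n ^ 'm \<Rightarrow> real ^ 'm \<Rightarrow> real \<Rightarrow> real ^ 'n \<Rightarrow> real ^ 'm \<Rightarrow> real" where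
  "H_fun X y \<delta> w z =
     (norm (y - X *v w - z))\<^sup>2 / 2
     + \<delta> * (\<Sum>i\<in>UNIV. \<bar>z $ i\<bar> / S_fun \<delta> ((y - X *v w) $ i))"

definition v_vec :: "real ^ 'n ^ 'm \<Rightarrow> real ^ 'm \<Rightarrow> real \<Rightarrow> real ^ 'n \<Rightarrow> real ^ 'm \<Rightarrow> real ^ 'm" where
  "v_vec X y \<delta> w z = (\<chi> i. \<bar>z $ i\<bar> * S_deriv \<delta> ((y - X *v w) $ i) / (S_fun \<delta> ((y - X *v w) $ i))\<^sup>2)"

definition gradH :: "real ^ 'n ^ 'm \<Rightarrow> real ^ 'm \<Rightarrow> real \<Rightarrow> real ^ 'n \<Rightarrow> real ^ 'm \<Rightarrow> real ^ 'n" where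
  "gradH X y \<delta> w z = - (transpose X *v (y - X *v w - z)) + \<delta> *\<^sub>R (transpose X *v v_vec X y \<delta> w z)"

primrec sarm :: "real ^ 'n ^ 'm \<Rightarrow> real ^ 'm \<Rightarrow> real \<Rightarrow> real \<Rightarrow> nat \<Rightarrow> (real ^ 'n) \<times> (real ^ 'm)" where
  "sarm X y \<delta> \<alpha> 0 = (0, 0)"
| "sarm X y \<delta> \<alpha> (Suc k) =
     (let w' = fst (sarm X y \<delta> \<alpha> k) - \<alpha> *\<^sub>R gradH X y \<delta> (fst (sarm X y \<delta> \<alpha> k)) (snd (sarm X y \<delta> \<alpha> k))
      in (w', T_vec \<delta> (y - X *v w')))"

definition frechet_subdiff :: "('a::real_inner \<Rightarrow> real) \<Rightarrow> 'a \<Rightarrow> 'a set" where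
  "frechet_subdiff f b =
     {u. Liminf (at b) (\<lambda>a. ereal ((f a - f b - inner u (a - b)) / norm (a - b))) \<ge> 0}"

definition limiting_subdiff :: "('a::real_inner \<Rightarrow> real) \<Rightarrow> 'a \<Rightarrow> 'a set" where
  "limiting_subdiff f x =
     {u. \<exists>xs us. xs \<longlonglongrightarrow> x \<and> (\<lambda>k. f (xs k)) \<longlonglongrightarrow> f x
               \<and> (\<forall>k. us k \<in> frechet_subdiff f (xs k)) \<and> us \<longlonglongrightarrow> u}"

end

theory Submission
  imports Defs
begin


lemma outer_lip:
  fixes a b s :: real
  assumes s: "s > 0" and a: "a \<ge> s" and b: "b \<ge> s"
  shows "\<bar>s^4 / a^3 - s^4 / b^3\<bar> \<le> 3 * \<bar>a - b\<bar>"
proof -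
  have key: "\<bar>s^4 / a^3 - s^4 / b^3\<bar> \<le> 3 * (b - a)" if ab: "s \<le> a" "a \<le> b" for a b
  proof -
    have a0: "a > 0" "b > 0" using ab s by auto
    have e: "s^4 / a^3 - s^4 / b^3 = s^4 * ((b - a) * (a^2 + a*b + b^2)) / (a^3 * b^3)"
      using a0 by (simp add: field_simps) (simp add: algebra_simps power2_eq_square power3_eq_cube)
    have ge: "s^4 * ((b - a) * (a^2 + a*b + b^2)) \<ge> 0" using a0 ab by simp
    have s4: "s^4 \<le> a * b^3" "s^4 \<le> a^2*b^2" "s^4 \<le> a^3 * b"
    proof -
      have "s^4 = s * s^3" by (simp add: power_def eval_nat_numeral)
      also have "\<dots> \<le> a * b^3" using ab s by (intro mult_mono power_mono) auto
      finally show "s^4 \<le> a * b^3" .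
      have "s^4 = s^2 * s^2" by (simp add: power_def eval_nat_numeral)
      also have "\<dots> \<le> a^2 * b^2" using ab s by (intro mult_mono power_mono) auto
      finally show "s^4 \<le> a^2 * b^2" .
      have "s^4 = s^3 * s" by (simp add: power_def eval_nat_numeral)
      also have "\<dots> \<le> a^3 * b" using ab s by (intro mult_mono power_mono) auto
      finally show "s^4 \<le> a^3 * b" .
    qed
    have "s^4 * (a^2 + a*b + b^2) = s^4 * a^2 + s^4 * (a*b) + s^4 * b^2" by (simp add: algebra_simps)
    also have "\<dots> \<le> (a*b^3)*a^2 + (a^2*b^2)*(a*b) + (a^3*b)*b^2"
      using s4 a0 by (intro add_mono mult_right_mono) auto
    also have "\<dots> = 3 * (a^3*b^3)" by (simp add: algebra_simps power2_eq_square power3_eq_cube)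
    finally have le: "s^4 * (a^2 + a*b + b^2) \<le> 3 * (a^3*b^3)" .
    have "s^4 * ((b - a) * (a^2 + a*b + b^2)) = (b - a) * (s^4 * (a^2 + a*b + b^2))" by simp
    also have "\<dots> \<le> (b - a) * (3 * (a^3*b^3))" using ab le by (intro mult_left_mono) auto
    finally have le2: "s^4 * ((b - a) * (a^2 + a*b + b^2)) \<le> 3 * (b - a) * (a^3*b^3)" by (simp add: algebra_simps)
    have pos: "a^3 * b^3 > 0" using a0 by simp
    have "s^4 / a^3 - s^4 / b^3 \<le> 3 * (b - a)"
      unfolding e using le2 pos by (simp add: divide_le_eq)
    moreover have "s^4 / a^3 - s^4 / b^3 \<ge> 0" unfolding e using ge pos by simp
    ultimately show ?thesis by simp
  qed
  show ?thesis
  proof (cases "a \<le> b")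
    case True then show ?thesis using key[of a b] a by simp
  next
    case False then show ?thesis using key[of b a] b by (simp add: abs_minus_commute)
  qed
qed

definition phi :: "real \<Rightarrow> real \<Rightarrow> real" where
  "phi \<delta> x = (if \<bar>x\<bar> \<le> sqrt \<delta> then - x else - (\<delta>^2 / x^3))"

lemma phi_out:
  assumes d: "\<delta> > 0" and x: "\<bar>x\<bar> \<ge> sqrt \<delta>"
  shows "phi \<delta> x = - ((sqrt \<delta>)^4 / x^3)"
proof -
  have "(sqrt \<delta>)^4 = ((sqrt \<delta>)^2)^2" by (simp flip: power_mult)
  hence d2: "\<delta>^2 = (sqrt \<delta>)^4" using d by simp
  show ?thesis
  proof (cases "\<bar>x\<bar> = sqrt \<delta>")
    case True
    hence "x = sqrt \<delta> \<or> x = - sqrt \<delta>" by auto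
    moreover have "sqrt \<delta> > 0" using d by simp
    ultimately show ?thesis unfolding phi_def using True
      by (auto simp: eval_nat_numeral field_simps)
  next
    case False then show ?thesis unfolding phi_def using x d2 by auto
  qed
qed

lemma phi_lip:
  assumes d: "\<delta> > 0"
  shows "\<bar>phi \<delta> a - phi \<delta> b\<bar> \<le> 3 * \<bar>a - b\<bar>"
proof -
  define s where "s = sqrt \<delta>"
  have s: "s > 0" using d by (simp add: s_def)
  have P3: "\<bar>phi \<delta> a - phi \<delta> b\<bar> \<le> 3 * \<bar>a - b\<bar>" if "a \<ge> s" "b \<ge> s" for a b
    using outer_lip[OF s that] phi_out[OF d, of a] phi_out[OF d, of b] that s
    unfolding s_def by (simp add: abs_minus_commute)
  have P1: "\<bar>phi \<delta> a - phi \<delta> b\<bar> \<le> 3 * \<bar>a - b\<bar>" if "a \<le> - s" "b \<le> - s" for a b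
  proof -
    have "phi \<delta> a = s^4 / (-a)^3" "phi \<delta> b = s^4 / (-b)^3"
      using phi_out[OF d, of a] phi_out[OF d, of b] that s unfolding s_def[symmetric]
      by (auto simp: power_minus_odd)
    moreover have "\<bar>s^4 / (-a)^3 - s^4 / (-b)^3\<bar> \<le> 3 * \<bar>(-a) - (-b)\<bar>"
      using outer_lip[OF s, of "-a" "-b"] that by simp
    ultimately show ?thesis by (simp add: abs_minus_commute)
  qed
  have P2: "\<bar>phi \<delta> a - phi \<delta> b\<bar> \<le> 3 * \<bar>a - b\<bar>" if "\<bar>a\<bar> \<le> s" "\<bar>b\<bar> \<le> s" for a b
    using that unfolding phi_def s_def by (auto simp: abs_minus_commute)
  have tri: "\<bar>phi \<delta> a - phi \<delta> b\<bar> \<le> 3 * \<bar>a - b\<bar>"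
    if "a \<le> c" "c \<le> b" "\<bar>phi \<delta> a - phi \<delta> c\<bar> \<le> 3 * \<bar>a - c\<bar>"
       "\<bar>phi \<delta> c - phi \<delta> b\<bar> \<le> 3 * \<bar>c - b\<bar>" for a b c
  proof -
    have "\<bar>phi \<delta> a - phi \<delta> b\<bar> \<le> \<bar>phi \<delta> a - phi \<delta> c\<bar> + \<bar>phi \<delta> c - phi \<delta> b\<bar>"
      using abs_triangle_ineq[of "phi \<delta> a - phi \<delta> c" "phi \<delta> c - phi \<delta> b"] by simp
    moreover have "\<bar>a - c\<bar> + \<bar>c - b\<bar> = \<bar>a - b\<bar>" using that(1,2) by simp
    ultimately show ?thesis using that(3,4) by linarith
  qed
  have main: "\<bar>phi \<delta> a - phi \<delta> b\<bar> \<le> 3 * \<bar>a - b\<bar>" if ab: "a \<le> b" for a b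
  proof -
    have Q2: "\<bar>phi \<delta> a - phi \<delta> b\<bar> \<le> 3 * \<bar>a - b\<bar>" if "-s \<le> a" "a \<le> b" for a b
    proof (cases "b \<le> s")
      case True then show ?thesis using P2[of a b] that by auto
    next
      case False
      show ?thesis
      proof (cases "a \<ge> s")
        case True then show ?thesis using P3 False by auto
      next
        case F2: False
        show ?thesis by (rule tri[of a s b]) (use F2 False that P2[of a s] P3[of s b] s in auto)
      qed
    qed
    show ?thesis
    proof (cases "a \<ge> -s")
      case True then show ?thesis using Q2 ab by auto
    next
      case False
      show ?thesis
      proof (cases "b \<le> -s")
        case True then show ?thesis using P1 False by auto
      next
        case F2: False
        show ?thesis by (rule tri[of a "-s" b]) (use F2 False ab P1[of a "-s"] Q2[of "-s" b] s in auto)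
      qed
    qed
  qed
  show ?thesis
  proof (cases "a \<le> b")
    case True then show ?thesis using main by auto
  next
    case False then show ?thesis using main[of b a] by (simp add: abs_minus_commute)
  qed
qed


lemma grad_comp:
  assumes d: "\<delta> > 0"
  shows "- (x - T_fun \<delta> x) + \<delta> * (\<bar>T_fun \<delta> x\<bar> * S_deriv \<delta> x / (S_fun \<delta> x)\<^sup>2) = phi \<delta> x"
proof (cases "\<bar>x\<bar> \<le> sqrt \<delta>")
  case True then show ?thesis by (simp add: T_fun_def phi_def)
next
  case False
  hence x2: "x^2 > \<delta>" using d
    by (metis abs_ge_zero not_le real_sqrt_abs real_sqrt_less_iff)
  have x0: "x \<noteq> 0" using x2 d by auto
  have S: "S_fun \<delta> x = \<bar>x\<bar>" "S_deriv \<delta> x = sgn x" using False by (auto simp: S_fun_def S_deriv_def)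
  have T: "T_fun \<delta> x = x - \<delta> / x" using False by (simp add: T_fun_def)
  have ph: "phi \<delta> x = - (\<delta>^2 / x^3)" using False by (simp add: phi_def)
  show ?thesis
  proof (cases "x > 0")
    case True
    have "\<delta> / x < x" using True x2 by (simp add: divide_less_eq power2_eq_square)
    hence "\<bar>x - \<delta> / x\<bar> = x - \<delta> / x" by simp
    then show ?thesis unfolding S T ph using True x0
      by (simp add: field_simps power2_eq_square power3_eq_cube)
  next
    case F: False
    hence xn: "x < 0" using x0 by simp
    have "\<delta> / x > x" using xn x2 by (simp add: less_divide_eq power2_eq_square)
    hence "\<bar>x - \<delta> / x\<bar> = \<delta> / x - x" by simp
    then show ?thesis unfolding S T ph using xn x0
      by (simp add: field_simps power2_eq_square power3_eq_cube)
  qed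
qed

lemma lin_aux: "- (M *v a) + c *\<^sub>R (M *v b) = M *v (-a + c *\<^sub>R (b :: real ^ 'm))"
  for M :: "real ^ 'm ^ 'n"
  by (simp add: vec.add vec.neg vec.diff matrix_scaleR_vector_ac scaleR_matrix_vector_assoc)

lemma grad_at_T:
  assumes d: "\<delta> > 0"
  shows "gradH X y \<delta> w (T_vec \<delta> (y - X *v w)) = transpose X *v (\<chi> i. phi \<delta> ((y - X *v w) $ i))"
proof -
  let ?r = "y - X *v w"
  let ?z = "T_vec \<delta> ?r"
  have e: "- (?r - ?z) + \<delta> *\<^sub>R v_vec X y \<delta> w ?z = (\<chi> i. phi \<delta> (?r $ i))"
    using grad_comp[OF d] by (simp add: vec_eq_iff v_vec_def T_vec_def)
  have "gradH X y \<delta> w ?z = transpose X *v (- (?r - ?z) + \<delta> *\<^sub>R v_vec X y \<delta> w ?z)"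
    unfolding gradH_def by (rule lin_aux)
  then show ?thesis using e by simp
qed

lemma min_comp:
  assumes d: "\<delta> > 0"
  shows "(x - T_fun \<delta> x)\<^sup>2 / 2 + \<delta> * (\<bar>T_fun \<delta> x\<bar> / S_fun \<delta> x) \<le> (x - a)\<^sup>2 / 2 + \<delta> * (\<bar>a\<bar> / S_fun \<delta> x)"
proof (cases "\<bar>x\<bar> \<le> sqrt \<delta>")
  case True
  have Sp: "S_fun \<delta> x > 0" "S_fun \<delta> x \<le> sqrt \<delta>"
  proof -
    have "S_fun \<delta> x \<le> sqrt \<delta> \<and> S_fun \<delta> x > 0"
    proof (cases "\<bar>x\<bar> < sqrt \<delta>")
      case True
      have "\<bar>x\<bar>^2 \<le> (sqrt \<delta>)^2" by (rule power_mono) (use True in auto)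
      hence "x^2 \<le> (sqrt \<delta>)^2" by simp
      hence x2: "x^2 \<le> sqrt \<delta> * sqrt \<delta>" by (simp add: power2_eq_square)
      have sp: "sqrt \<delta> > 0" using d by simp
      have aux: "(s * s) / (2 * s) = s / 2" if "s > 0" for s :: real using that by simp
      have "x^2/(2 * sqrt \<delta>) \<le> (sqrt \<delta> * sqrt \<delta>)/(2 * sqrt \<delta>)"
        by (rule divide_right_mono) (use x2 sp in auto)
      also have "\<dots> = sqrt \<delta> / 2" using sp aux[of "sqrt \<delta>"] by blast
      finally have "x^2/(2 * sqrt \<delta>) \<le> sqrt \<delta> / 2" .
      moreover have "x^2/(2 * sqrt \<delta>) \<ge> 0" using sp by simp
      moreover have "S_fun \<delta> x = x^2/(2 * sqrt \<delta>) + sqrt \<delta> / 2" using True by (simp add: S_fun_def)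
      moreover have "sqrt \<delta> / 2 > 0" using sp by simp
      ultimately show ?thesis by linarith
    next
      case False then show ?thesis using \<open>\<bar>x\<bar> \<le> sqrt \<delta>\<close> d by (simp add: S_fun_def)
    qed
    then show "S_fun \<delta> x > 0" "S_fun \<delta> x \<le> sqrt \<delta>" by auto
  qed
  have c: "\<delta> / S_fun \<delta> x \<ge> \<bar>x\<bar>"
  proof -
    have "\<bar>x\<bar> * S_fun \<delta> x \<le> sqrt \<delta> * sqrt \<delta>" using True Sp d by (intro mult_mono) auto
    then show ?thesis using Sp d by (simp add: le_divide_eq)
  qed
  have "x * a \<le> \<bar>x\<bar> * \<bar>a\<bar>" by (metis abs_ge_self abs_mult)
  also have "\<dots> \<le> \<delta> / S_fun \<delta> x * \<bar>a\<bar>" using c by (intro mult_right_mono) auto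
  finally have "x * a \<le> \<delta> * (\<bar>a\<bar> / S_fun \<delta> x)" by simp
  moreover have "T_fun \<delta> x = 0" using True by (simp add: T_fun_def)
  moreover have "(x - a)^2/2 = x^2/2 - x*a + a^2/2" by (simp add: power2_eq_square field_simps)
  moreover have "a^2/2 \<ge> 0" by simp
  moreover have "(x - T_fun \<delta> x)^2/2 + \<delta>*(\<bar>T_fun \<delta> x\<bar>/S_fun \<delta> x) = x^2/2"
    using \<open>T_fun \<delta> x = 0\<close> by simp
  ultimately show ?thesis by linarith
next
  case False
  hence x2: "x^2 > \<delta>" using d
    by (metis abs_ge_zero not_le real_sqrt_abs real_sqrt_less_iff)
  have x0: "x \<noteq> 0" using x2 d by auto
  have S: "S_fun \<delta> x = \<bar>x\<bar>" using False by (auto simp: S_fun_def)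
  have T: "T_fun \<delta> x = x - \<delta> / x" using False by (simp add: T_fun_def)
  define t where "t = x - \<delta> / x"
  show ?thesis
  proof (cases "x > 0")
    case True
    have "\<delta> / x < x" using True x2 by (simp add: divide_less_eq power2_eq_square)
    hence at: "\<bar>t\<bar> = t" by (simp add: t_def)
    have xt: "x - t = \<delta> / x" by (simp add: t_def)
    have "(x - a)\<^sup>2 / 2 + \<delta> * (\<bar>a\<bar> / \<bar>x\<bar>) - ((x - t)\<^sup>2 / 2 + \<delta> * (\<bar>t\<bar> / \<bar>x\<bar>))
        = (a - t)\<^sup>2 / 2 + (\<delta> / x) * (\<bar>a\<bar> - a)"
      using True x0 unfolding at by (simp add: t_def field_simps power2_eq_square)
    moreover have "(\<delta> / x) * (\<bar>a\<bar> - a) \<ge> 0" using True d by simp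
    ultimately show ?thesis unfolding S T t_def[symmetric] by (smt (verit) zero_le_power2 divide_nonneg_nonneg)
  next
    case F: False
    hence xn: "x < 0" using x0 by simp
    have "\<delta> / x > x" using xn x2 by (simp add: less_divide_eq power2_eq_square)
    hence at: "\<bar>t\<bar> = - t" by (simp add: t_def)
    have "(x - a)\<^sup>2 / 2 + \<delta> * (\<bar>a\<bar> / \<bar>x\<bar>) - ((x - t)\<^sup>2 / 2 + \<delta> * (\<bar>t\<bar> / \<bar>x\<bar>))
        = (a - t)\<^sup>2 / 2 + (\<delta> / (-x)) * (\<bar>a\<bar> + a)"
      using xn x0 unfolding at by (simp add: t_def field_simps power2_eq_square)
    moreover have "(\<delta> / (-x)) * (\<bar>a\<bar> + a) \<ge> 0" using xn d by (intro mult_nonneg_nonneg divide_nonneg_pos) auto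
    ultimately show ?thesis unfolding S T t_def[symmetric] by (smt (verit) zero_le_power2 divide_nonneg_nonneg)
  qed
qed

lemma norm_sq_vec: "(norm (v :: real ^ 'm))\<^sup>2 = (\<Sum>i\<in>UNIV. (v $ i)\<^sup>2)"
  by (simp add: norm_vec_def L2_set_def sum_nonneg)

lemma H_min:
  assumes d: "\<delta> > 0"
  shows "H_fun X y \<delta> w (T_vec \<delta> (y - X *v w)) \<le> H_fun X y \<delta> w a"
proof -
  let ?r = "y - X *v w"
  have "H_fun X y \<delta> w b = (\<Sum>i\<in>UNIV. (?r $ i - b $ i)\<^sup>2 / 2 + \<delta> * (\<bar>b $ i\<bar> / S_fun \<delta> (?r $ i)))" for b
    unfolding H_fun_def norm_sq_vec by (simp add: sum.distrib sum_distrib_left sum_divide_distrib)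
  moreover have "(\<Sum>i\<in>UNIV. (?r $ i - T_vec \<delta> ?r $ i)\<^sup>2 / 2 + \<delta> * (\<bar>T_vec \<delta> ?r $ i\<bar> / S_fun \<delta> (?r $ i)))
     \<le> (\<Sum>i\<in>UNIV. (?r $ i - a $ i)\<^sup>2 / 2 + \<delta> * (\<bar>a $ i\<bar> / S_fun \<delta> (?r $ i)))"
  proof (intro sum_mono)
    fix i
    show "(?r $ i - T_vec \<delta> ?r $ i)\<^sup>2 / 2 + \<delta> * (\<bar>T_vec \<delta> ?r $ i\<bar> / S_fun \<delta> (?r $ i))
     \<le> (?r $ i - a $ i)\<^sup>2 / 2 + \<delta> * (\<bar>a $ i\<bar> / S_fun \<delta> (?r $ i))"
      using min_comp[OF d, of "?r $ i" "a $ i"] by (simp add: T_vec_def)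
  qed
  ultimately show ?thesis by simp
qed

lemma zero_limiting:
  assumes "\<And>a. f b \<le> f a"
  shows "0 \<in> limiting_subdiff f b"
proof -
  have "0 \<in> frechet_subdiff f b"
    unfolding frechet_subdiff_def
    using assms by (auto intro!: Liminf_bounded always_eventually divide_nonneg_nonneg)
  then show ?thesis unfolding limiting_subdiff_def
    by (intro CollectI exI[of _ "\<lambda>k. b"] exI[of _ "\<lambda>k. 0"]) auto
qed

lemma sarm_snd: "snd (sarm X y \<delta> \<alpha> (Suc j)) = T_vec \<delta> (y - X *v fst (sarm X y \<delta> \<alpha> (Suc j)))"
  by (simp add: Let_def)

lemma sarm_fst: "fst (sarm X y \<delta> \<alpha> (Suc j)) = fst (sarm X y \<delta> \<alpha> j) - \<alpha> *\<^sub>R gradH X y \<delta> (fst (sarm X y \<delta> \<alpha> j)) (snd (sarm X y \<delta> \<alpha> j))"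
  by (simp add: Let_def)

theorem theorem2:
  fixes X :: "real ^ 'n ^ 'm" and y :: "real ^ 'm" and \<delta> L \<alpha> :: real
  assumes precond: "transpose X ** X = mat 1"
    and delta_pos: "\<delta> > 0"
    and L_pos: "L > 0"
    and upper_bound: "\<And>w w' z. (\<forall>i. \<bar>z $ i\<bar> \<le> S_fun \<delta> ((y - X *v w) $ i)) \<Longrightarrow>
         H_fun X y \<delta> w' z \<le> H_fun X y \<delta> w z + inner (gradH X y \<delta> w z) (w' - w) + L / 2 * (norm (w' - w))\<^sup>2"
    and alpha_pos: "0 < \<alpha>" and alpha_le: "\<alpha> \<le> 2 / L"
  shows "\<exists>\<rho>2 > 0. \<forall>k \<ge> 1.
           \<exists>B \<in> limiting_subdiff (H_fun X y \<delta> (fst (sarm X y \<delta> \<alpha> (k + 1)))) (snd (sarm X y \<delta> \<alpha> (k + 1))).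
             norm (gradH X y \<delta> (fst (sarm X y \<delta> \<alpha> (k + 1))) (snd (sarm X y \<delta> \<alpha> (k + 1))), B)
               \<le> \<rho>2 * norm (sarm X y \<delta> \<alpha> (k + 1) - sarm X y \<delta> \<alpha> k)"
proof -
  let ?G = "\<lambda>w. transpose X *v (\<chi> i. phi \<delta> ((y - X *v w) $ i))"
  obtain K1 where K1: "K1 > 0" "\<And>v. norm (transpose X *v v) \<le> norm v * K1"
    using bounded_linear.pos_bounded[OF matrix_vector_mul_bounded_linear[of "transpose X"]] by blast
  obtain K2 where K2: "K2 > 0" "\<And>v. norm (X *v v) \<le> norm v * K2"
    using bounded_linear.pos_bounded[OF matrix_vector_mul_bounded_linear[of X]] by blast
  define \<rho> where "\<rho> = 3 * K1 * K2 + 1 / \<alpha>"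
  have \<rho>pos: "\<rho> > 0" unfolding \<rho>_def using K1 K2 alpha_pos by (simp add: add_pos_pos)
  have lipG: "norm (?G w1 - ?G w0) \<le> 3 * K1 * K2 * norm (w1 - w0)" for w1 w0
  proof -
    let ?p1 = "(\<chi> i. phi \<delta> ((y - X *v w1) $ i))" and ?p0 = "(\<chi> i. phi \<delta> ((y - X *v w0) $ i))"
    have "norm (?p1 - ?p0) \<le> norm (3 *\<^sub>R (X *v (w0 - w1)))"
    proof (rule norm_le_componentwise_cart)
      fix i
      have "\<bar>phi \<delta> ((y - X *v w1) $ i) - phi \<delta> ((y - X *v w0) $ i)\<bar>
            \<le> 3 * \<bar>(y - X *v w1) $ i - (y - X *v w0) $ i\<bar>" by (rule phi_lip[OF delta_pos])
      moreover have "(y - X *v w1) $ i - (y - X *v w0) $ i = (X *v (w0 - w1)) $ i"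
        by (simp add: matrix_vector_mult_diff_distrib)
      moreover have "norm ((3 *\<^sub>R (X *v (w0 - w1))) $ i) = 3 * \<bar>(X *v (w0 - w1)) $ i\<bar>"
        by simp
      moreover have "norm ((?p1 - ?p0) $ i) = \<bar>phi \<delta> ((y - X *v w1) $ i) - phi \<delta> ((y - X *v w0) $ i)\<bar>"
        by simp
      ultimately show "norm ((?p1 - ?p0) $ i) \<le> norm ((3 *\<^sub>R (X *v (w0 - w1))) $ i)"
        by simp
    qed
    also have "\<dots> = 3 * norm (X *v (w0 - w1))" by simp
    also have "\<dots> \<le> 3 * (norm (w1 - w0) * K2)" using K2(2)[of "w0 - w1"] by (simp add: norm_minus_commute)
    finally have a: "norm (?p1 - ?p0) \<le> 3 * (norm (w1 - w0) * K2)" .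
    have "norm (?G w1 - ?G w0) = norm (transpose X *v (?p1 - ?p0))"
      by (simp add: matrix_vector_mult_diff_distrib)
    also have "\<dots> \<le> norm (?p1 - ?p0) * K1" by (rule K1(2))
    also have "\<dots> \<le> 3 * (norm (w1 - w0) * K2) * K1" using a K1 by (intro mult_right_mono) auto
    finally show ?thesis by (simp add: algebra_simps)
  qed
  show ?thesis
  proof (intro exI[of _ \<rho>] conjI allI impI \<rho>pos)
    fix k :: nat assume "k \<ge> 1"
    then obtain j where kj: "k = Suc j" by (cases k) auto
    define w0 where "w0 = fst (sarm X y \<delta> \<alpha> k)"
    define w1 where "w1 = fst (sarm X y \<delta> \<alpha> (k + 1))"
    have z0: "snd (sarm X y \<delta> \<alpha> k) = T_vec \<delta> (y - X *v w0)" unfolding w0_def kj by (rule sarm_snd)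
    have z1: "snd (sarm X y \<delta> \<alpha> (k + 1)) = T_vec \<delta> (y - X *v w1)" unfolding w1_def by (simp add: sarm_snd del: sarm.simps)
    have g0: "gradH X y \<delta> w0 (snd (sarm X y \<delta> \<alpha> k)) = ?G w0" unfolding z0 by (rule grad_at_T[OF delta_pos])
    have g1: "gradH X y \<delta> w1 (snd (sarm X y \<delta> \<alpha> (k + 1))) = ?G w1" unfolding z1 by (rule grad_at_T[OF delta_pos])
    have w1e: "w1 = w0 - \<alpha> *\<^sub>R ?G w0" unfolding w1_def w0_def using sarm_fst[of X y \<delta> \<alpha> k] g0 w0_def by simp
    have "norm (?G w0) = norm (w1 - w0) / \<alpha>" using w1e alpha_pos by simp
    have ng0: "norm (?G w0) = norm (w1 - w0) / \<alpha>"
    proof -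
      have "w1 - w0 = - (\<alpha> *\<^sub>R ?G w0)" using w1e by simp
      hence "norm (w1 - w0) = \<alpha> * norm (?G w0)" using alpha_pos by simp
      then show ?thesis using alpha_pos by simp
    qed
    have "norm (?G w1) \<le> norm (?G w1 - ?G w0) + norm (?G w0)" using norm_triangle_ineq[of "?G w1 - ?G w0" "?G w0"] by simp
    also have "\<dots> \<le> 3 * K1 * K2 * norm (w1 - w0) + norm (w1 - w0) / \<alpha>" using lipG ng0 by simp
    also have "\<dots> = \<rho> * norm (w1 - w0)" unfolding \<rho>_def by (simp add: algebra_simps)
    also have "\<dots> \<le> \<rho> * norm (sarm X y \<delta> \<alpha> (k + 1) - sarm X y \<delta> \<alpha> k)"
    proof -
      have "norm (w1 - w0) \<le> norm (sarm X y \<delta> \<alpha> (k + 1) - sarm X y \<delta> \<alpha> k)"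
        using norm_fst_le[of "fst (sarm X y \<delta> \<alpha> (k + 1) - sarm X y \<delta> \<alpha> k)" "snd (sarm X y \<delta> \<alpha> (k + 1) - sarm X y \<delta> \<alpha> k)"]
        unfolding w1_def w0_def fst_diff[symmetric] prod.collapse .
      then show ?thesis using \<rho>pos by (intro mult_left_mono) auto
    qed
    finally have main: "norm (?G w1) \<le> \<rho> * norm (sarm X y \<delta> \<alpha> (k + 1) - sarm X y \<delta> \<alpha> k)" .
    have B: "0 \<in> limiting_subdiff (H_fun X y \<delta> w1) (snd (sarm X y \<delta> \<alpha> (k + 1)))"
      unfolding z1 by (rule zero_limiting) (rule H_min[OF delta_pos])
    show "\<exists>B \<in> limiting_subdiff (H_fun X y \<delta> (fst (sarm X y \<delta> \<alpha> (k + 1)))) (snd (sarm X y \<delta> \<alpha> (k + 1))).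
             norm (gradH X y \<delta> (fst (sarm X y \<delta> \<alpha> (k + 1))) (snd (sarm X y \<delta> \<alpha> (k + 1))), B)
               \<le> \<rho> * norm (sarm X y \<delta> \<alpha> (k + 1) - sarm X y \<delta> \<alpha> k)"
      using B main g1 unfolding w1_def[symmetric] by (intro bexI[of _ 0]) auto
  qed
qed

end
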